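(* For any $d \in \mathbb{N}$ and any graph class $\mathcal{C}$, the following are equivalent: (i) $\mathcal{C}$ has tree rank at most $d$; (ii) for every $r \in \mathbb{N}$ there exists $m \in \mathbb{N}$ such that every vertex of every graph in $\mathcal{C}$ has $(r,m)$-rank at most $d$.
   Context: Graphs are finite and simple. For a graph $G$ and vertex $v$, $N_r^G(v)$ is the closed $r$-neighborhood of $v$ (all vertices reachable from $v$ by a path with at most $r$ edges, including $v$); $G-S$ is the subgraph induced on $V(G)\setminus S$. The depth of a rooted tree is the number of edges on a leaf-to-root path; $T_{d,m}$ is the rooted tree of depth $d$ in which every non-leaf vertex has exactly $m$ children. A $\le r$-subdivision of a graph $H$ is obtained by replacing each edge $uv$ by a path from $u$ to $v$ with at most $r$ internal vertices (paths internally disjoint). $H$ is an $r$-shallow topological minor of $G$ if $G$ has a subgraph isomorphic to a $\le r$-subdivision of $H$. A graph class $\mathcal{C}$ has tree rank at most $d$ if for every $r\in\mathbb{N}$ there exists $m\in\mathbb{N}$ such that no $G\in\mathcal{C}$ contains $T_{d,m}$ as an $r$-shallow topological minor. The $(r,m)$-rank of vertices of $G$ (values in $\mathbb{N}\cup\{\infty\}$) is defined by the following procedure: initially every vertex has rank $\infty$; in rounds $i=1,2,3,\dots$, every vertex $v$ that currently has rank $\infty$ receives rank $i$ if there exists a set $S\subseteq V(G)\setminus\{v\}$ with $|S|\le m$ such that every vertex of $N_r^{G-S}(v)\setminus\{v\}$ received a finite rank in rounds $1,\dots,i-1$ (all vertices are checked simultaneously in a round); the procedure stops when all vertices have finite rank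 or a round assigns no new rank. Vertices still of rank $\infty$ keep rank $\infty$. *)

theory Defs
  imports Main "HOL-Library.Extended_Nat"
begin

type_synonym 'a graph = "'a set \<times> ('a \<times> 'a) set"

definition verts :: "'a graph \<Rightarrow> 'a set" where "verts G = fst G"
definition edges :: "'a graph \<Rightarrow> ('a \<times> 'a) set" where "edges G = snd G"

definition is_graph :: "'a graph \<Rightarrow> bool" where
  "is_graph G \<longleftrightarrow> finite (verts G) \<and> edges G \<subseteq> verts G \<times> verts G
     \<and> (\<forall>x y. (x, y) \<in> edges G \<longrightarrow> (y, x) \<in> edges G)
     \<and> (\<forall>x. (x, x) \<notin> edges G)"

definition del_verts :: "'a graph \<Rightarrow> 'a set \<Rightarrow> 'a graph" where
  "del_verts G S = (verts G - S, {(x, y) \<in> edges G. x \<notin> S \<and> y \<notin> S})"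

fun nbhd :: "'a graph \<Rightarrow> nat \<Rightarrow> 'a \<Rightarrow> 'a set" where
  "nbhd G 0 v = {v}"
| "nbhd G (Suc k) v = nbhd G k v \<union> {u. \<exists>w \<in> nbhd G k v. (w, u) \<in> edges G}"

text \<open>The rooted tree T_{d,m}: vertices are words of length at most d over
  {0..<m} (the root is the empty word), each word xs with length < d has the m
  children xs @ [i].\<close>
definition tree :: "nat \<Rightarrow> nat \<Rightarrow> nat list graph" where
  "tree d m = ({xs. length xs \<le> d \<and> set xs \<subseteq> {..<m}},
     {(xs, xs @ [i]) | xs i. length xs < d \<and> set xs \<subseteq> {..<m} \<and> i < m}
     \<union> {(xs @ [i], xs) | xs i. length xs < d \<and> set xs \<subseteq> {..<m} \<and> i < m})"

text \<open>H is an r-shallow topological minor of G: G contains a subgraph isomorphic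
  to a \<le>r-subdivision of H. Branch vertices are mapped injectively by f; the
  edge xy of H is mapped to the path f x, P(x,y), f y in G, where P(x,y) is the
  list of at most r internal vertices; internal vertices are distinct, avoid
  all branch vertices, and paths of distinct edges are internally disjoint.\<close>
definition shallow_top_minor :: "nat \<Rightarrow> 'b graph \<Rightarrow> 'a graph \<Rightarrow> bool" where
  "shallow_top_minor r H G \<longleftrightarrow>
    (\<exists>(f :: 'b \<Rightarrow> 'a) (P :: 'b \<times> 'b \<Rightarrow> 'a list).
       inj_on f (verts H) \<and> f ` verts H \<subseteq> verts G \<and>
       (\<forall>(x, y) \<in> edges H.
          length (P (x, y)) \<le> r \<and> distinct (P (x, y)) \<and>
          set (P (x, y)) \<subseteq> verts G - f ` verts H \<and>
          P (y, x) = rev (P (x, y)) \<and>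
          (let w = f x # P (x, y) @ [f y] in
             \<forall>i < length w - 1. (w ! i, w ! Suc i) \<in> edges G)) \<and>
       (\<forall>(x, y) \<in> edges H. \<forall>(x', y') \<in> edges H.
          {x, y} \<noteq> {x', y'} \<longrightarrow> set (P (x, y)) \<inter> set (P (x', y')) = {}))"

definition tree_rank_le :: "'a graph set \<Rightarrow> nat \<Rightarrow> bool" where
  "tree_rank_le C d \<longleftrightarrow>
    (\<forall>r. \<exists>m. \<forall>G \<in> C. \<not> shallow_top_minor r (tree d m) G)"

text \<open>ranked_upto r m G i = set of vertices that received a finite rank in
  rounds 1..i of the (r,m)-rank procedure.\<close>
fun ranked_upto :: "nat \<Rightarrow> nat \<Rightarrow> 'a graph \<Rightarrow> nat \<Rightarrow> 'a set" where
  "ranked_upto r m G 0 = {}"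
| "ranked_upto r m G (Suc i) = ranked_upto r m G i \<union>
     {v \<in> verts G. \<exists>S. S \<subseteq> verts G - {v} \<and> card S \<le> m \<and>
        nbhd (del_verts G S) r v - {v} \<subseteq> ranked_upto r m G i}"

definition rm_rank :: "nat \<Rightarrow> nat \<Rightarrow> 'a graph \<Rightarrow> 'a \<Rightarrow> enat" where
  "rm_rank r m G v = (if \<exists>i. v \<in> ranked_upto r m G i
     then enat (LEAST i. v \<in> ranked_upto r m G i) else \<infinity>)"

end

theory Submission
  imports Defs
begin


declare ranked_upto.simps(2)[simp del]

abbreviation "walk G ws \<equiv> successively (\<lambda>a b. (a,b) \<in> edges G) ws"

lemma nbhd_mono: "nbhd G k v \<subseteq> nbhd G (k+j) v"
  by (induction j) auto

lemma path_nbhd: "ws \<noteq> [] \<Longrightarrow> walk G ws \<Longrightarrow> last ws \<in> nbhd G (length ws - 1) (hd ws)"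
proof (induction ws rule: rev_induct)
  case Nil then show ?case by simp
next
  case (snoc x xs)
  show ?case
  proof (cases "xs = []")
    case True then show ?thesis by simp
  next
    case False
    then have w: "walk G xs" and e: "(last xs, x) \<in> edges G" using snoc.prems
      by (auto simp: successively_append_iff)
    have "last xs \<in> nbhd G (length xs - 1) (hd xs)" using snoc.IH False w by blast
    then have "x \<in> nbhd G (Suc (length xs - 1)) (hd xs)" using e by auto
    moreover have "Suc (length xs - 1) = length (xs @ [x]) - 1" using False by (cases xs) auto
    ultimately show ?thesis using False by simp
  qed
qed

lemma nbhd_path: "u \<in> nbhd G k v \<Longrightarrow> \<exists>ws. ws \<noteq> [] \<and> hd ws = v \<and> last ws = u \<and> distinct ws
   \<and> length ws \<le> Suc k \<and> walk G ws"
proof (induction k arbitrary: u)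
  case 0 then show ?case by (intro exI[of _ "[v]"]) auto
next
  case (Suc k)
  show ?case
  proof (cases "u \<in> nbhd G k v")
    case True
    then obtain ws where "ws \<noteq> [] \<and> hd ws = v \<and> last ws = u \<and> distinct ws
   \<and> length ws \<le> Suc k \<and> walk G ws" using Suc.IH by blast
    then show ?thesis by (intro exI[of _ ws]) auto
  next
    case False
    then obtain w where w: "w \<in> nbhd G k v" "(w,u) \<in> edges G" using Suc.prems by auto
    then obtain ws where ws: "ws \<noteq> [] \<and> hd ws = v \<and> last ws = w \<and> distinct ws
   \<and> length ws \<le> Suc k \<and> walk G ws" using Suc.IH by blast
    show ?thesis
    proof (cases "u \<in> set ws")
      case True
      then obtain as bs where ab: "ws = as @ u # bs" by (meson split_list)
      have "walk G (as @ [u])" using ws ab by (auto simp: successively_append_iff successively_Cons)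
      moreover have "hd (as @ [u]) = v" using ws ab by (cases as) auto
      ultimately show ?thesis using ws ab by (intro exI[of _ "as @ [u]"]) auto
    next
      case False
      have "walk G (ws @ [u])" using ws w by (auto simp: successively_append_iff)
      moreover have "hd (ws @ [u]) = v" using ws by (cases ws) auto
      ultimately show ?thesis using ws False by (intro exI[of _ "ws @ [u]"]) auto
    qed
  qed
qed

lemma ranked_step: "ranked_upto r m G j \<subseteq> ranked_upto r m G (Suc j)"
  by (subst ranked_upto.simps(2)) (rule Un_upper1)
lemma ranked_mono: "i \<le> j \<Longrightarrow> ranked_upto r m G i \<subseteq> ranked_upto r m G j"
proof (induction j)
  case 0 then show ?case by (metis le_zero_eq subset_refl)
next
  case (Suc j)
  show ?case
  proof (cases "i = Suc j")
    case False
    then have "i \<le> j" using Suc.prems by simp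
    then have "ranked_upto r m G i \<subseteq> ranked_upto r m G j" using Suc.IH by blast
    then show ?thesis using ranked_step[of r m G j] by (rule subset_trans)
  next
    case True then show ?thesis by (simp only: subset_refl)
  qed
qed

lemma rank_le_iff: "rm_rank r m G v \<le> enat d \<longleftrightarrow> v \<in> ranked_upto r m G d"
proof
  assume a: "rm_rank r m G v \<le> enat d"
  have ex: "\<exists>i. v \<in> ranked_upto r m G i"
  proof (rule ccontr)
    assume "\<not> (\<exists>i. v \<in> ranked_upto r m G i)"
    then have "rm_rank r m G v = \<infinity>" unfolding rm_rank_def by (simp only: if_False)
    then have "\<infinity> \<le> enat d" using a by (simp only:)
    then show False by (rule infinity_ileE)
  qed
  define L where "L = (LEAST i. v \<in> ranked_upto r m G i)"
  have "rm_rank r m G v = enat L"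
    unfolding rm_rank_def L_def using ex by (simp only: if_True)
  then have "enat L \<le> enat d" using a by metis
  then have Ld: "L \<le> d" by (simp only: enat_ord_simps)
  have "v \<in> ranked_upto r m G L" using ex unfolding L_def by (rule LeastI_ex)
  then show "v \<in> ranked_upto r m G d" using ranked_mono[OF Ld] by (rule rev_subsetD)
next
  assume b: "v \<in> ranked_upto r m G d"
  define L where "L = (LEAST i. v \<in> ranked_upto r m G i)"
  have "rm_rank r m G v = enat L"
    unfolding rm_rank_def L_def using b by (meson if_P)
  moreover have "L \<le> d" using b unfolding L_def by (rule Least_le)
  ultimately show "rm_rank r m G v \<le> enat d" by (simp only: enat_ord_simps)
qed

lemma edges_del: "edges (del_verts G S) = {(x, y) \<in> edges G. x \<notin> S \<and> y \<notin> S}"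
  by (simp add: del_verts_def edges_def)
lemma verts_del: "verts (del_verts G S) = verts G - S"
  by (simp add: del_verts_def verts_def)



lemma tree_verts: "verts (tree d M) = {xs. length xs \<le> d \<and> set xs \<subseteq> {..<M}}"
  by (simp add: tree_def verts_def)

lemma tree_edge: "length xs < d \<Longrightarrow> set xs \<subseteq> {..<M} \<Longrightarrow> j < M \<Longrightarrow> (xs, xs @ [j]) \<in> edges (tree d M)"
  by (simp add: tree_def edges_def)

lemma walk_nth: "walk G ws \<longleftrightarrow> (\<forall>i < length ws - 1. (ws ! i, ws ! Suc i) \<in> edges G)"
  unfolding successively_conv_nth by (simp add: less_diff_conv)

lemma walk_del: "walk G ws \<Longrightarrow> set ws \<inter> S = {} \<Longrightarrow> walk (del_verts G S) ws"
  by (erule successively_mono) (auto simp: edges_del)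

lemma lower:
  assumes g: "is_graph G" and stm: "shallow_top_minor r (tree d M) G" and mM: "m < M"
  shows "\<exists>v \<in> verts G. v \<notin> ranked_upto (Suc r) m G d"
proof -
  define H where "H = tree d M"
  obtain f P where inj: "inj_on f (verts H)" and fV: "f ` verts H \<subseteq> verts G"
    and Pall: "\<forall>(x, y) \<in> edges H.
          length (P (x, y)) \<le> r \<and> distinct (P (x, y)) \<and>
          set (P (x, y)) \<subseteq> verts G - f ` verts H \<and>
          P (y, x) = rev (P (x, y)) \<and>
          (let w = f x # P (x, y) @ [f y] in
             \<forall>i < length w - 1. (w ! i, w ! Suc i) \<in> edges G)"
    and Pdisj: "\<forall>(x, y) \<in> edges H. \<forall>(x', y') \<in> edges H.
          {x, y} \<noteq> {x', y'} \<longrightarrow> set (P (x, y)) \<inter> set (P (x', y')) = {}"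
    by (insert stm[unfolded shallow_top_minor_def, folded H_def], elim exE conjE, rule that, assumption+)
  have Pe: "length (P (x, y)) \<le> r \<and> set (P (x, y)) \<subseteq> verts G - f ` verts H \<and>
     walk G (f x # P (x, y) @ [f y])" if "(x,y) \<in> edges H" for x y
    using Pall that unfolding walk_nth Let_def by blast
  have Pd: "set (P (x, y)) \<inter> set (P (x', y')) = {}" if "(x,y) \<in> edges H" "(x',y') \<in> edges H"
     "{x, y} \<noteq> {x', y'}" for x y x' y'
    using Pdisj that by blast
  have finV: "finite (verts G)" and EV: "edges G \<subseteq> verts G \<times> verts G" using g by (auto simp: is_graph_def)
  have claim: "\<forall>xs. length xs + i \<le> d \<longrightarrow> set xs \<subseteq> {..<M} \<longrightarrow> f xs \<notin> ranked_upto (Suc r) m G i" for i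
  proof (induction i)
    case 0 then show ?case by simp
  next
    case (Suc i)
    show ?case
    proof (intro allI impI)
      fix xs :: "nat list"
      assume len: "length xs + Suc i \<le> d" and xsM: "set xs \<subseteq> {..<M}"
      show "f xs \<notin> ranked_upto (Suc r) m G (Suc i)"
      proof
        assume "f xs \<in> ranked_upto (Suc r) m G (Suc i)"
        moreover have "f xs \<notin> ranked_upto (Suc r) m G i" using Suc.IH len xsM by simp
        ultimately obtain S where S: "S \<subseteq> verts G - {f xs}" "card S \<le> m"
          and Sn: "nbhd (del_verts G S) (Suc r) (f xs) - {f xs} \<subseteq> ranked_upto (Suc r) m G i"
          unfolding ranked_upto.simps(2) by blast
        define c where "c j = xs @ [j]" for j
        define B where "B j = insert (f (c j)) (set (P (xs, c j)))" for j
        have ce: "(xs, c j) \<in> edges H" if "j < M" for j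
          unfolding c_def H_def using tree_edge len xsM that by simp
        have cv: "c j \<in> verts H" if "j < M" for j
          unfolding c_def H_def tree_verts using len xsM that by auto
        have xv: "xs \<in> verts H" unfolding H_def tree_verts using len xsM by auto
        have Bdisj: "B j \<inter> B j' = {}" if "j < M" "j' < M" "j \<noteq> j'" for j j'
        proof -
          have "c j \<noteq> c j'" using that by (simp add: c_def)
          then have "f (c j) \<noteq> f (c j')" using inj cv that by (meson inj_onD)
          moreover have "f (c j) \<notin> set (P (xs, c j'))" using Pe[OF ce[of j']] cv that by blast
          moreover have "f (c j') \<notin> set (P (xs, c j))" using Pe[OF ce[of j]] cv that by blast
          moreover have "{xs, c j} \<noteq> {xs, c j'}" using \<open>c j \<noteq> c j'\<close> by (auto simp: c_def doubleton_eq_iff)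
          then have "set (P (xs, c j)) \<inter> set (P (xs, c j')) = {}" using Pd ce that by blast
          ultimately show ?thesis unfolding B_def by blast
        qed
        have "\<exists>j<M. B j \<inter> S = {}"
        proof (rule ccontr)
          assume "\<not> (\<exists>j<M. B j \<inter> S = {})"
          then have "\<forall>j\<in>{..<M}. \<exists>s. s \<in> B j \<inter> S" by blast
          then obtain g where g: "\<forall>j\<in>{..<M}. g j \<in> B j \<inter> S" by metis
          have "inj_on g {..<M}"
          proof (rule inj_onI)
            fix j j' assume jj: "j \<in> {..<M}" "j' \<in> {..<M}" "g j = g j'"
            show "j = j'"
            proof (rule ccontr)
              assume "j \<noteq> j'"
              then have "B j \<inter> B j' = {}" using Bdisj jj by simp
              moreover have "g j \<in> B j" using g jj(1) by blast
              moreover have "g j' \<in> B j'" using g jj(2) by blast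
              ultimately show False using jj(3) by (metis IntI empty_iff)
            qed
          qed
          moreover have "g ` {..<M} \<subseteq> S" using g by blast
          moreover have "finite S" using S finV finite_subset by blast
          ultimately have "card {..<M} \<le> card S" by (meson card_inj_on_le)
          then show False using S mM by simp
        qed
        then obtain j where j: "j < M" "B j \<inter> S = {}" by blast
        define w where "w = f xs # P (xs, c j) @ [f (c j)]"
        have "walk G w" using Pe[OF ce[OF j(1)]] unfolding w_def by blast
        moreover have "set w \<inter> S = {}" using j S unfolding w_def B_def by auto
        ultimately have "walk (del_verts G S) w" by (rule walk_del)
        then have "last w \<in> nbhd (del_verts G S) (length w - 1) (hd w)"
          using path_nbhd[of w] unfolding w_def by simp
        moreover have "last w = f (c j)" "hd w = f xs" unfolding w_def by simp_all
        ultimately have fcn: "f (c j) \<in> nbhd (del_verts G S) (length w - 1) (f xs)" by simp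
        have lw: "length w - 1 \<le> Suc r" using Pe[OF ce[OF j(1)]] unfolding w_def by simp
        have "nbhd (del_verts G S) (length w - 1) (f xs) \<subseteq> nbhd (del_verts G S) (length w - 1 + (Suc r - (length w - 1))) (f xs)"
          by (rule nbhd_mono)
        also have "length w - 1 + (Suc r - (length w - 1)) = Suc r" using lw by simp
        finally have "f (c j) \<in> nbhd (del_verts G S) (Suc r) (f xs)" using fcn by (rule subsetD)
        moreover have "f (c j) \<noteq> f xs"
        proof
          assume "f (c j) = f xs"
          then have "c j = xs" using inj cv xv j by (meson inj_onD)
          then show False by (simp add: c_def)
        qed
        ultimately have "f (c j) \<in> ranked_upto (Suc r) m G i" using Sn by blast
        moreover have "length (c j) + i \<le> d" "set (c j) \<subseteq> {..<M}" using len xsM j by (auto simp: c_def)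
        ultimately show False using Suc.IH by blast
      qed
    qed
  qed
  have "[] \<in> verts H" unfolding H_def tree_verts by simp
  then have "f [] \<in> verts G" using fV by blast
  moreover have "f [] \<notin> ranked_upto (Suc r) m G d" using claim[of d] by simp
  ultimately show ?thesis by blast
qed



definition Inv :: "'a graph \<Rightarrow> nat \<Rightarrow> nat \<Rightarrow> nat \<Rightarrow> nat list set \<Rightarrow> (nat list \<Rightarrow> 'a) \<Rightarrow> (nat list \<Rightarrow> 'a list) \<Rightarrow> bool" where
"Inv G r M d T f Q \<longleftrightarrow> inj_on f T \<and> f ` T \<subseteq> verts G \<and> (\<forall>t\<in>T. f t \<notin> ranked_upto r M G (d - length t)) \<and>
 (\<forall>t\<in>T-{[]}. length (Q t) \<le> r \<and> distinct (Q t) \<and> set (Q t) \<subseteq> verts G - f ` T \<and> walk G (f (butlast t) # Q t @ [f t])) \<and>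
 (\<forall>t\<in>T-{[]}. \<forall>t'\<in>T-{[]}. t \<noteq> t' \<longrightarrow> set (Q t) \<inter> set (Q t') = {})"

lemma walk_in: "walk G' (a # xs) \<Longrightarrow> x \<in> set xs \<Longrightarrow> \<exists>y. (y, x) \<in> edges G'"
proof (induction xs arbitrary: a)
  case Nil then show ?case by simp
next
  case (Cons b xs)
  then show ?case by (cases "x = b") (auto simp: successively_Cons)
qed

lemma finite_tree: "finite (verts (tree d m))"
proof -
  have "verts (tree d m) = {xs. set xs \<subseteq> {..<m} \<and> length xs \<le> d}" unfolding tree_verts by blast
  then show ?thesis using finite_lists_length_le[of "{..<m}" d] by simp
qed

lemma build:
  assumes g: "is_graph G" and v: "v \<in> verts G" and vr: "v \<notin> ranked_upto r M G d"
    and MN: "card (verts (tree d m)) * (r+1) \<le> M"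
  shows "finite T \<Longrightarrow> T \<subseteq> verts (tree d m) \<Longrightarrow> [] \<in> T \<Longrightarrow> (\<forall>t\<in>T. t \<noteq> [] \<longrightarrow> butlast t \<in> T)
     \<Longrightarrow> \<exists>f Q. Inv G r M d T f Q"
proof (induction "card T" arbitrary: T rule: less_induct)
  case less
  have finV: "finite (verts G)" and EV: "edges G \<subseteq> verts G \<times> verts G" using g by (auto simp: is_graph_def)
  show ?case
  proof (cases "T = {[]}")
    case True
    have "Inv G r M d T (\<lambda>_. v) (\<lambda>_. [])" unfolding Inv_def True using v vr by simp
    then show ?thesis by blast
  next
    case False
    define n where "n = Max (length ` T)"
    have "n \<in> length ` T" unfolding n_def using less.prems by (intro Max_in) auto
    then obtain t where tT: "t \<in> T" and tn: "length t = n" by blast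
    have tmax: "length s \<le> length t" if "s \<in> T" for s
      unfolding tn n_def using less.prems that by (intro Max_ge) auto
    obtain s where "s \<in> T" "s \<noteq> []" using False less.prems(3) by blast
    then have "t \<noteq> []" using tmax[of s] by auto
    define T' where "T' = T - {t}"
    have TT': "T = insert t T'" "t \<notin> T'" unfolding T'_def using tT by auto
    have cT': "card T' < card T" unfolding T'_def using tT less.prems(1) by (meson card_Diff1_less)
    have cl: "butlast s \<in> T'" if "s \<in> T" "s \<noteq> []" for s
    proof -
      have "butlast s \<in> T" using less.prems(4) that by blast
      moreover have "length (butlast s) < length s" using that by simp
      then have "butlast s \<noteq> t" using tmax[OF that(1)] by auto
      ultimately show ?thesis unfolding T'_def by blast
    qed
    have "\<exists>f Q. Inv G r M d T' f Q"
    proof (rule less.hyps[OF cT'])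
      show "finite T'" "T' \<subseteq> verts (tree d m)" using less.prems unfolding T'_def by auto
      show "[] \<in> T'" using less.prems(3) \<open>t \<noteq> []\<close> unfolding T'_def by blast
      show "\<forall>s\<in>T'. s \<noteq> [] \<longrightarrow> butlast s \<in> T'" using cl unfolding T'_def by blast
    qed
    then obtain f Q where I: "Inv G r M d T' f Q" by blast
    have inj: "inj_on f T'" and fV: "f ` T' \<subseteq> verts G"
      and fr: "\<forall>s\<in>T'. f s \<notin> ranked_upto r M G (d - length s)"
      and fQ: "\<forall>s\<in>T'-{[]}. length (Q s) \<le> r \<and> distinct (Q s) \<and> set (Q s) \<subseteq> verts G - f ` T' \<and> walk G (f (butlast s) # Q s @ [f s])"
      and fD: "\<forall>s\<in>T'-{[]}. \<forall>s'\<in>T'-{[]}. s \<noteq> s' \<longrightarrow> set (Q s) \<inter> set (Q s') = {}"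
      using I unfolding Inv_def by blast+
    define p where "p = butlast t"
    have pT': "p \<in> T'" unfolding p_def using cl tT \<open>t \<noteq> []\<close> by blast
    have ltd: "length t \<le> d" using less.prems(2) tT unfolding tree_verts by auto
    have dp: "d - length p = Suc (d - length t)" unfolding p_def using ltd \<open>t \<noteq> []\<close>
      by (cases t rule: rev_cases) auto
    have fpr: "f p \<notin> ranked_upto r M G (Suc (d - length t))" using fr pT' dp by metis
    have fpV: "f p \<in> verts G" using fV pT' by blast
    define U where "U = f ` T' \<union> (\<Union>s\<in>T'-{[]}. set (Q s))"
    have finT': "finite T'" using less.prems(1) unfolding T'_def by simp
    have UV: "U \<subseteq> verts G" unfolding U_def using fV fQ by blast
    have "card U \<le> card (f ` T') + card (\<Union>s\<in>T'-{[]}. set (Q s))"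
      unfolding U_def by (rule card_Un_le)
    also have "card (f ` T') \<le> card T'" by (rule card_image_le[OF finT'])
    also have "card (\<Union>s\<in>T'-{[]}. set (Q s)) \<le> (\<Sum>s\<in>T'-{[]}. card (set (Q s)))"
      using finT' by (intro card_UN_le) simp
    also have "(\<Sum>s\<in>T'-{[]}. card (set (Q s))) \<le> (\<Sum>s\<in>T'-{[]}. r)"
    proof (rule sum_mono)
      fix s assume "s \<in> T' - {[]}"
      then have "length (Q s) \<le> r" using fQ by blast
      then show "card (set (Q s)) \<le> r" using card_length le_trans by blast
    qed
    also have "(\<Sum>s\<in>T'-{[]}. r) \<le> card T' * r"
      using finT' by (simp add: card_mono mult_le_mono1)
    finally have cU: "card U \<le> card T' * (r+1)" by simp
    have "card T' \<le> card (verts (tree d m))"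
      using less.prems(2) finite_tree unfolding T'_def by (intro card_mono) auto
    then have "card T' * (r+1) \<le> M" using MN by (meson le_trans mult_le_mono1)
    with cU have cUM: "card U \<le> M" by simp
    define S where "S = U - {f p}"
    have SV: "S \<subseteq> verts G - {f p}" unfolding S_def using UV by blast
    have cS: "card S \<le> M" unfolding S_def using cUM finV UV
      by (meson card_Diff1_le le_trans)
    have "\<not> (nbhd (del_verts G S) r (f p) - {f p} \<subseteq> ranked_upto r M G (d - length t))"
    proof
      assume "nbhd (del_verts G S) r (f p) - {f p} \<subseteq> ranked_upto r M G (d - length t)"
      then have "f p \<in> ranked_upto r M G (Suc (d - length t))"
        unfolding ranked_upto.simps(2) using SV cS fpV by blast
      then show False using fpr by contradiction
    qed
    then obtain u where un: "u \<in> nbhd (del_verts G S) r (f p)" and ufp: "u \<noteq> f p"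
      and ur: "u \<notin> ranked_upto r M G (d - length t)" by blast
    obtain ws where ws: "ws \<noteq> []" "hd ws = f p" "last ws = u" "distinct ws" "length ws \<le> Suc r"
      "walk (del_verts G S) ws" using nbhd_path[OF un] by blast
    define ps where "ps = butlast (tl ws)"
    have wsf: "ws = f p # ps @ [u]"
    proof (cases ws)
      case Nil then show ?thesis using ws by simp
    next
      case (Cons a rest)
      then have "rest \<noteq> []" using ws ufp by auto
      moreover have "last rest = u" using Cons ws \<open>rest \<noteq> []\<close> by simp
      ultimately have "rest = butlast rest @ [u]" by (metis append_butlast_last_id)
      then show ?thesis using Cons ws unfolding ps_def by simp
    qed
    have newV: "x \<in> verts G \<and> x \<notin> U" if xin: "x \<in> set (ps @ [u])" for x
    proof -
      obtain y where "(y, x) \<in> edges (del_verts G S)" using walk_in[of "del_verts G S" "f p" "ps @ [u]" x] ws(6) wsf xin by auto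
      then have "x \<notin> S" "x \<in> verts G" using EV by (auto simp: edges_del)
      moreover have "x \<noteq> f p" using ws(4) wsf xin by auto
      ultimately show ?thesis unfolding S_def by blast
    qed
    have uV: "u \<in> verts G" "u \<notin> U" using newV by auto
    have psV: "set ps \<subseteq> verts G" "set ps \<inter> U = {}" using newV by auto
    have psu: "u \<notin> set ps" "distinct ps" using ws(4) wsf by auto
    have lps: "length ps \<le> r" using ws(5) wsf by simp
    have wG: "walk G (f p # ps @ [u])"
      using ws(6) wsf by (metis (no_types, lifting) successively_mono edges_del mem_Collect_eq case_prodD)
    define f' where "f' = f(t := u)"
    define Q' where "Q' = Q(t := ps)"
    have f'T': "\<forall>s\<in>T'. f' s = f s" "f' t = u" unfolding f'_def using TT' by auto
    have Q'T': "\<forall>s\<in>T'. Q' s = Q s" "Q' t = ps" unfolding Q'_def using TT' by auto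
    have imgT: "f' ` T = insert u (f ` T')" using f'T' TT' by auto
    have uf: "u \<notin> f ` T'" using uV(2) unfolding U_def by blast
    have "Inv G r M d T f' Q'"
      unfolding Inv_def
    proof (intro conjI)
      have "inj_on f' T' = inj_on f T'" by (rule inj_on_cong) (simp add: f'T'(1))
      then have "inj_on f' T'" using inj by simp
      moreover have "f' ` T' = f ` T'" by (rule image_cong[OF refl]) (simp add: f'T'(1))
      moreover have "T' - {t} = T'" using TT'(2) by simp
      ultimately show "inj_on f' T" unfolding TT'(1) inj_on_insert using f'T'(2) uf by simp
      show "f' ` T \<subseteq> verts G" unfolding imgT using uV fV by blast
      show "\<forall>s\<in>T. f' s \<notin> ranked_upto r M G (d - length s)"
        using fr f'T' ur TT'(1) by auto
      show "\<forall>s\<in>T - {[]}. length (Q' s) \<le> r \<and> distinct (Q' s) \<and> set (Q' s) \<subseteq> verts G - f' ` T \<and>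
          walk G (f' (butlast s) # Q' s @ [f' s])"
      proof
        fix s assume sT: "s \<in> T - {[]}"
        show "length (Q' s) \<le> r \<and> distinct (Q' s) \<and> set (Q' s) \<subseteq> verts G - f' ` T \<and>
          walk G (f' (butlast s) # Q' s @ [f' s])"
        proof (cases "s = t")
          case True
          have "f' (butlast s) = f p" unfolding True p_def[symmetric] using f'T' pT' by simp
          then show ?thesis using True Q'T' f'T' lps psu psV imgT wG unfolding U_def by auto
        next
          case False
          then have sT': "s \<in> T' - {[]}" using sT TT' by auto
          have bs: "butlast s \<in> T'" using cl sT by blast
          have "length (Q s) \<le> r \<and> distinct (Q s) \<and> set (Q s) \<subseteq> verts G - f ` T' \<and> walk G (f (butlast s) # Q s @ [f s])"
            using fQ sT' by blast
          moreover have "u \<notin> set (Q s)" using uV(2) sT' unfolding U_def by blast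
          ultimately show ?thesis using Q'T' f'T' sT' bs imgT by auto
        qed
      qed
      show "\<forall>s\<in>T - {[]}. \<forall>s'\<in>T - {[]}. s \<noteq> s' \<longrightarrow> set (Q' s) \<inter> set (Q' s') = {}"
      proof (intro ballI impI)
        fix s s' assume s: "s \<in> T - {[]}" and s': "s' \<in> T - {[]}" and ss: "s \<noteq> s'"
        have old: "set (Q s) \<inter> set ps = {}" if "s \<in> T' - {[]}" for s
          using psV(2) that unfolding U_def by blast
        show "set (Q' s) \<inter> set (Q' s') = {}"
        proof (cases "s = t")
          case True
          then have "s' \<in> T' - {[]}" using s' ss TT' by auto
          then show ?thesis using True old Q'T' by auto
        next
          case False
          then have sT': "s \<in> T' - {[]}" using s TT' by auto
          show ?thesis
          proof (cases "s' = t")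
            case True
            then show ?thesis using sT' old Q'T' by auto
          next
            case False
            then have "s' \<in> T' - {[]}" using s' TT' by auto
            then show ?thesis using sT' fD ss Q'T' by auto
          qed
        qed
      qed
    qed
    then show ?thesis by blast
  qed
qed



lemma tree_edge_cases:
  assumes "(x, y) \<in> edges (tree d m)"
  shows "(\<exists>i. y = x @ [i] \<and> y \<in> verts (tree d m)) \<or> (\<exists>i. x = y @ [i] \<and> x \<in> verts (tree d m))"
  using assms unfolding tree_def edges_def verts_def by auto

lemma upper:
  assumes g: "is_graph G" and v: "v \<in> verts G" and vr: "v \<notin> ranked_upto r M G d"
    and MN: "card (verts (tree d m)) * (r+1) \<le> M"
  shows "shallow_top_minor r (tree d m) G"
proof -
  define H where "H = tree d m"
  have "\<exists>f Q. Inv G r M d (verts H) f Q" unfolding H_def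
  proof (rule build[OF g v vr MN])
    show "finite (verts (tree d m))" by (rule finite_tree)
    show "[] \<in> verts (tree d m)" unfolding tree_verts by simp
    show "\<forall>t\<in>verts (tree d m). t \<noteq> [] \<longrightarrow> butlast t \<in> verts (tree d m)"
      unfolding tree_verts by (auto dest: in_set_butlastD)
  qed simp
  then obtain f Q where I: "Inv G r M d (verts H) f Q" by blast
  have inj: "inj_on f (verts H)" and fV: "f ` verts H \<subseteq> verts G"
    and fQ: "\<forall>s\<in>verts H-{[]}. length (Q s) \<le> r \<and> distinct (Q s) \<and> set (Q s) \<subseteq> verts G - f ` verts H \<and> walk G (f (butlast s) # Q s @ [f s])"
    and fD: "\<forall>s\<in>verts H-{[]}. \<forall>s'\<in>verts H-{[]}. s \<noteq> s' \<longrightarrow> set (Q s) \<inter> set (Q s') = {}"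
    using I unfolding Inv_def by blast+
  have sym: "(b, a) \<in> edges G" if "(a, b) \<in> edges G" for a b using g that unfolding is_graph_def by blast
  define P where "P = (\<lambda>(x::nat list, y::nat list). if length y = Suc (length x) then Q y else rev (Q x))"
  define ch where "ch = (\<lambda>(x::nat list, y::nat list). if length y = Suc (length x) then y else x)"
  have key: "ch (x, y) \<in> verts H - {[]} \<and> {x, y} = {butlast (ch (x, y)), ch (x, y)} \<and>
     set (P (x, y)) = set (Q (ch (x, y))) \<and> P (y, x) = rev (P (x, y)) \<and>
     length (P (x, y)) \<le> r \<and> distinct (P (x, y)) \<and> set (P (x, y)) \<subseteq> verts G - f ` verts H \<and>
     walk G (f x # P (x, y) @ [f y])"
    if e: "(x, y) \<in> edges H" for x y
  proof -
    from tree_edge_cases[OF e[unfolded H_def]]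
    show ?thesis
    proof
      assume "\<exists>i. y = x @ [i] \<and> y \<in> verts (tree d m)"
      then obtain i where y: "y = x @ [i]" "y \<in> verts H" unfolding H_def by blast
      have c: "ch (x, y) = y" "P (x, y) = Q y" "P (y, x) = rev (Q y)" unfolding ch_def P_def y by simp_all
      have "y \<in> verts H - {[]}" using y by simp
      moreover have "butlast y = x" using y by simp
      ultimately show ?thesis using c fQ by auto
    next
      assume "\<exists>i. x = y @ [i] \<and> x \<in> verts (tree d m)"
      then obtain i where x: "x = y @ [i]" "x \<in> verts H" unfolding H_def by blast
      have c: "ch (x, y) = x" "P (x, y) = rev (Q x)" "P (y, x) = Q x" unfolding ch_def P_def x by simp_all
      have xH: "x \<in> verts H - {[]}" using x by simp
      moreover have bx: "butlast x = y" using x by simp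
      moreover have "walk G (f x # rev (Q x) @ [f y])"
      proof -
        have w: "walk G (f y # Q x @ [f x])" using fQ xH bx by blast
        have "f x # rev (Q x) @ [f y] = rev (f y # Q x @ [f x])" by simp
        moreover have "walk G (rev (f y # Q x @ [f x]))" unfolding successively_rev
          using w by (rule successively_mono) (rule sym)
        ultimately show ?thesis by simp
      qed
      ultimately show ?thesis using c fQ by auto
    qed
  qed
  show ?thesis unfolding shallow_top_minor_def H_def[symmetric]
  proof (intro exI conjI)
    show "inj_on f (verts H)" by (rule inj)
    show "f ` verts H \<subseteq> verts G" by (rule fV)
    show "\<forall>(x, y)\<in>edges H. length (P (x, y)) \<le> r \<and> distinct (P (x, y)) \<and>
          set (P (x, y)) \<subseteq> verts G - f ` verts H \<and> P (y, x) = rev (P (x, y)) \<and>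
          (let w = f x # P (x, y) @ [f y] in \<forall>i<length w - 1. (w ! i, w ! Suc i) \<in> edges G)"
    proof (intro ballI, clarify)
      fix x y assume e: "(x, y) \<in> edges H"
      show "length (P (x, y)) \<le> r \<and> distinct (P (x, y)) \<and>
          set (P (x, y)) \<subseteq> verts G - f ` verts H \<and> P (y, x) = rev (P (x, y)) \<and>
          (let w = f x # P (x, y) @ [f y] in \<forall>i<length w - 1. (w ! i, w ! Suc i) \<in> edges G)"
        using key[OF e] unfolding Let_def walk_nth[symmetric] by blast
    qed
    show "\<forall>(x, y)\<in>edges H. \<forall>(x', y')\<in>edges H. {x, y} \<noteq> {x', y'} \<longrightarrow> set (P (x, y)) \<inter> set (P (x', y')) = {}"
    proof (intro ballI, clarify)
      fix x y x' y' assume e: "(x, y) \<in> edges H" and e': "(x', y') \<in> edges H" and ne: "{x, y} \<noteq> {x', y'}"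
      have k: "ch (x, y) \<in> verts H - {[]}" "{x, y} = {butlast (ch (x, y)), ch (x, y)}" "set (P (x, y)) = set (Q (ch (x, y)))"
        using key[OF e] by blast+
      have k': "ch (x', y') \<in> verts H - {[]}" "{x', y'} = {butlast (ch (x', y')), ch (x', y')}" "set (P (x', y')) = set (Q (ch (x', y')))"
        using key[OF e'] by blast+
      have "ch (x, y) \<noteq> ch (x', y')" using k(2) k'(2) ne by metis
      then show "set (P (x, y)) \<inter> set (P (x', y')) = {}" using fD k k' by simp
    qed
  qed
qed

theorem theorem1p3:
  fixes C :: "'a graph set" and d :: nat
  assumes "\<forall>G \<in> C. is_graph G"
  shows "tree_rank_le C d \<longleftrightarrow>
    (\<forall>r. \<exists>m. \<forall>G \<in> C. \<forall>v \<in> verts G. rm_rank r m G v \<le> enat d)"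
proof
  assume tr: "tree_rank_le C d"
  show "\<forall>r. \<exists>m. \<forall>G \<in> C. \<forall>v \<in> verts G. rm_rank r m G v \<le> enat d"
  proof
    fix r
    obtain m where m: "\<forall>G \<in> C. \<not> shallow_top_minor r (tree d m) G"
      using tr unfolding tree_rank_le_def by blast
    define M where "M = card (verts (tree d m)) * (r+1)"
    have "\<forall>G \<in> C. \<forall>v \<in> verts G. rm_rank r M G v \<le> enat d"
    proof (intro ballI)
      fix G v assume G: "G \<in> C" and v: "v \<in> verts G"
      show "rm_rank r M G v \<le> enat d"
      proof (rule ccontr)
        assume "\<not> rm_rank r M G v \<le> enat d"
        then have vr: "v \<notin> ranked_upto r M G d" using rank_le_iff[of r M G v d] by blast
        have gG: "is_graph G" using assms G by blast
        have "card (verts (tree d m)) * (r+1) \<le> M" unfolding M_def by simp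
        then have "shallow_top_minor r (tree d m) G" by (rule upper[OF gG v vr])
        then show False using m G by blast
      qed
    qed
    then show "\<exists>m. \<forall>G \<in> C. \<forall>v \<in> verts G. rm_rank r m G v \<le> enat d" by blast
  qed
next
    assume h: "\<forall>r. \<exists>m. \<forall>G \<in> C. \<forall>v \<in> verts G. rm_rank r m G v \<le> enat d"
  show "tree_rank_le C d" unfolding tree_rank_le_def
  proof
    fix r
    obtain m where m: "\<forall>G \<in> C. \<forall>v \<in> verts G. rm_rank (Suc r) m G v \<le> enat d" using h by blast
    have "\<forall>G\<in>C. \<not> shallow_top_minor r (tree d (Suc m)) G"
    proof (intro ballI notI)
      fix G assume G: "G \<in> C" and s: "shallow_top_minor r (tree d (Suc m)) G"
      have gG: "is_graph G" using assms G by blast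
      have "\<exists>v \<in> verts G. v \<notin> ranked_upto (Suc r) m G d" using lower[OF gG s] by simp
      then obtain v where v: "v \<in> verts G" "v \<notin> ranked_upto (Suc r) m G d" by (rule bexE)
      then show False using m G rank_le_iff[of "Suc r" m G v d] by blast
    qed
    then show "\<exists>m. \<forall>G\<in>C. \<not> shallow_top_minor r (tree d m) G" by blast
  qed
qed

end
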